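(* Let $\Omega\subset\mathbb{C}$ be a simply connected domain, $(g,\mathcal{P},\mathcal{Q})$ a Weierstrass data of the first kind on $\Omega$, and $\lambda\in\mathbb{R}$ with $1+i\lambda g(z)\neq0$ for all $z\in\Omega$. Let $g_\lambda:=\frac{g}{1+i\lambda g}$, $\mathcal{P}_\lambda:=\mathcal{P}$, and let $\mathcal{Q}_\lambda:\Omega\to\mathbb{R}$ be a $\mathcal{C}^2$ function with $(\mathcal{Q}_\lambda)_z=\left(\frac1g+i\lambda\right)(g\mathcal{Q}_z-i\lambda\mathcal{P}_z)$ (so that $(g_\lambda,\mathcal{P}_\lambda,\mathcal{Q}_\lambda)$ is again a Weierstrass data of the first kind). Then $$\mathbf{X}_{[g_\lambda,\mathcal{P}_\lambda,\mathcal{Q}_\lambda]}=L_\lambda\,\mathbf{X}_{[g,\mathcal{P},\mathcal{Q}]}$$ up to an additive constant vector, where $L_\lambda$ is the linear map of $\mathbb{L}^4$ with matrix $$L_\lambda=\begin{bmatrix}1&0&0&0\\0&1&-\lambda&-\lambda\\0&\lambda&1-\frac{\lambda^2}{2}&-\frac{\lambda^2}{2}\\0&-\lambda&\frac{\lambda^2}{2}&1+\frac{\lambda^2}{2}\end{bmatrix}.$$ In particular the two marginally trapped surfaces are congruent in $\mathbb{L}^4$.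
   Context: $\Omega\subset\mathbb{R}^2\equiv\mathbb{C}$ has complex coordinate $z=u+iv$, and $\partial_z=\frac12(\partial_u-i\partial_v)$, $\partial_{\overline z}=\frac12(\partial_u+i\partial_v)$; subscripts denote partial derivatives. $\mathbb{L}^4$ is $\mathbb{R}^4$ with the Lorentzian metric $\langle x,y\rangle=x_1y_1+x_2y_2+x_3y_3-x_4y_4$. A Weierstrass data of the first kind on $\Omega$ is a triple $(g,\mathcal{P},\mathcal{Q})$ where $g:\Omega\to\mathbb{C}\setminus\{0\}$ and $\mathcal{P},\mathcal{Q}:\Omega\to\mathbb{R}$ are $\mathcal{C}^2$, satisfying $g_{\overline z}=0$, $\mathcal{P}_{z\overline z}=|g|^2\mathcal{Q}_{z\overline z}$, and $\mathcal{P}_z-|g|^2\mathcal{Q}_z\neq0$ at every point of $\Omega$. For such data, $\mathbf{X}_{[g,\mathcal{P},\mathcal{Q}]}:\Omega\to\mathbb{R}^4$ denotes any map (determined up to an additive constant vector) with $\mathbf{X}_z=\mathcal{P}_z\,(1/g,\ i/g,\ 1,\ 1)^T+\mathcal{Q}_z\,(g,\ -ig,\ -1,\ 1)^T$; it is a conformal parameterization of a marginally trapped surface in $\mathbb{L}^4$. *)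

theory Defs
  imports "HOL-Analysis.Analysis"
begin

definition pu :: "(complex \<Rightarrow> 'a::real_normed_vector) \<Rightarrow> complex \<Rightarrow> 'a" where
  "pu f z = frechet_derivative f (at z) 1"

definition pv :: "(complex \<Rightarrow> 'a::real_normed_vector) \<Rightarrow> complex \<Rightarrow> 'a" where
  "pv f z = frechet_derivative f (at z) \<i>"

definition dz :: "(complex \<Rightarrow> complex) \<Rightarrow> complex \<Rightarrow> complex" where
  "dz f z = (pu f z - \<i> * pv f z) / 2"

definition dzbar :: "(complex \<Rightarrow> complex) \<Rightarrow> complex \<Rightarrow> complex" where
  "dzbar f z = (pu f z + \<i> * pv f z) / 2"

definition dzR :: "(complex \<Rightarrow> real) \<Rightarrow> complex \<Rightarrow> complex" where
  "dzR f = dz (\<lambda>w. complex_of_real (f w))"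

(* C^1 and C^2 on a set (intended: open set): differentiable with continuous partials *)
definition C1_on :: "complex set \<Rightarrow> (complex \<Rightarrow> 'a::real_normed_vector) \<Rightarrow> bool" where
  "C1_on S f \<longleftrightarrow> (\<forall>z\<in>S. f differentiable (at z)) \<and>
     continuous_on S (pu f) \<and> continuous_on S (pv f)"

definition C2_on :: "complex set \<Rightarrow> (complex \<Rightarrow> 'a::real_normed_vector) \<Rightarrow> bool" where
  "C2_on S f \<longleftrightarrow> C1_on S f \<and> C1_on S (pu f) \<and> C1_on S (pv f)"

definition WD1 :: "complex set \<Rightarrow> (complex \<Rightarrow> complex) \<Rightarrow> (complex \<Rightarrow> real) \<Rightarrow> (complex \<Rightarrow> real) \<Rightarrow> bool" where
  "WD1 \<Omega> g P Q \<longleftrightarrow> C2_on \<Omega> g \<and> C2_on \<Omega> P \<and> C2_on \<Omega> Q \<and>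
     (\<forall>z\<in>\<Omega>. g z \<noteq> 0) \<and>
     (\<forall>z\<in>\<Omega>. dzbar g z = 0) \<and>
     (\<forall>z\<in>\<Omega>. dzbar (dzR P) z = complex_of_real ((cmod (g z))\<^sup>2) * dzbar (dzR Q) z) \<and>
     (\<forall>z\<in>\<Omega>. dzR P z - complex_of_real ((cmod (g z))\<^sup>2) * dzR Q z \<noteq> 0)"

definition Xz :: "(complex \<Rightarrow> complex) \<Rightarrow> (complex \<Rightarrow> real) \<Rightarrow> (complex \<Rightarrow> real) \<Rightarrow> complex \<Rightarrow> complex ^ 4" where
  "Xz g P Q z = vector
     [dzR P z * (1 / g z) + dzR Q z * g z,
      dzR P z * (\<i> / g z) + dzR Q z * (- \<i> * g z),
      dzR P z * 1 + dzR Q z * (-1),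
      dzR P z * 1 + dzR Q z * 1]"

definition is_X :: "complex set \<Rightarrow> (complex \<Rightarrow> complex) \<Rightarrow> (complex \<Rightarrow> real) \<Rightarrow> (complex \<Rightarrow> real) \<Rightarrow> (complex \<Rightarrow> real ^ 4) \<Rightarrow> bool" where
  "is_X \<Omega> g P Q X \<longleftrightarrow> (\<forall>z\<in>\<Omega>. X differentiable (at z)) \<and>
     (\<forall>z\<in>\<Omega>. \<forall>k. dzR (\<lambda>w. X w $ k) z = Xz g P Q z $ k)"

definition lorentz :: "real ^ 4 \<Rightarrow> real ^ 4 \<Rightarrow> real" where
  "lorentz x y = x$1 * y$1 + x$2 * y$2 + x$3 * y$3 - x$4 * y$4"

definition Lmat :: "real \<Rightarrow> real ^ 4 ^ 4" where
  "Lmat l = vector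
     [vector [1, 0, 0, 0],
      vector [0, 1, -l, -l],
      vector [0, l, 1 - l\<^sup>2/2, - (l\<^sup>2/2)],
      vector [0, -l, l\<^sup>2/2, 1 + l\<^sup>2/2]]"

end

theory Submission
  imports Defs
begin

lemma vector_4 [simp]:
 "(vector [x,y,z,w] ::('a::zero)^4)$1 = x"
 "(vector [x,y,z,w] ::('a::zero)^4)$2 = y"
 "(vector [x,y,z,w] ::('a::zero)^4)$3 = z"
 "(vector [x,y,z,w] ::('a::zero)^4)$4 = w"
  unfolding vector_def by simp_all

lemma alg_core:
  fixes a b g u w d L :: complex
  assumes ug: "u * g = 1" and wd: "w * d = 1" and dd: "d = 1 + \<i> * L * g" and ii: "\<i> * \<i> = -1"
  shows "a * (d*u) + ((u + \<i> * L) * (g * b - \<i> * L * a)) * (g*w) = a*u + b*g"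
   "a * (\<i>*d*u) + ((u + \<i> * L) * (g * b - \<i> * L * a)) * (- \<i> * (g*w)) = (a*\<i>*u - b*\<i>*g) - L*(a-b) - L*(a+b)"
   "2*(a - ((u + \<i> * L) * (g * b - \<i> * L * a))) = 2*(L*(a*\<i>*u - b*\<i>*g)) + (2 - L*L)*(a-b) - L*L*(a+b)"
   "2*(a + ((u + \<i> * L) * (g * b - \<i> * L * a))) = -2*(L*(a*\<i>*u - b*\<i>*g)) + L*L*(a-b) + (2+L*L)*(a+b)"
  using assms by algebra+

lemma alg:
  fixes g a b q :: complex and l :: real
  assumes "g \<noteq> 0" "1 + \<i> * of_real l * g \<noteq> 0"
    "q = (1 / g + \<i> * of_real l) * (g * b - \<i> * of_real l * a)"
  shows "(vector [a * (1 / (g/(1 + \<i> * of_real l * g))) + q * (g/(1 + \<i> * of_real l * g)),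
      a * (\<i> / (g/(1 + \<i> * of_real l * g))) + q * (- \<i> * (g/(1 + \<i> * of_real l * g))),
      a * 1 + q * (-1),
      a * 1 + q * 1] :: complex^4) $ k =
   (\<Sum>j\<in>UNIV. complex_of_real (Lmat l $ k $ j) * (vector [a * (1 / g) + b * g,
      a * (\<i> / g) + b * (- \<i> * g), a * 1 + b * (-1), a * 1 + b * 1] :: complex^4) $ j)"
proof -
  define d where "d = 1 + \<i> * of_real l * g"
  define u where "u = 1 / g"
  define w where "w = 1 / d"
  define L where "L = complex_of_real l"
  have ug: "u * g = 1" using assms(1) unfolding u_def by simp
  have wd: "w * d = 1" using assms(2) unfolding w_def d_def by simp
  have r1: "1 / (g/d) = d * u" "\<i> / (g/d) = \<i> * d * u" "g / d = g * w" unfolding u_def w_def by simp_all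
  have q: "q = (u + \<i> * L) * (g * b - \<i> * L * a)" using assms(3) unfolding u_def L_def by simp
  have ii: "\<i> * \<i> = -1" by simp
  have gu: "g * u = 1" using ug by (simp add: mult.commute)
  have dd: "d = 1 + \<i> * L * g" unfolding d_def L_def by simp
  have L2: "complex_of_real (l^2/2) = L*L/2" unfolding L_def by (simp add: power2_eq_square)
  note A = alg_core[OF ug wd dd ii, of a b]
  have ad: "1 / g = u" "\<i> / g = \<i> * u" unfolding u_def by simp_all
  have e1: "k = 1 \<Longrightarrow> ?thesis"
    unfolding d_def[symmetric] r1(1,2) unfolding r1(3) q using A(1) by (simp add: sum_4 Lmat_def ad)
  have e2: "k = 2 \<Longrightarrow> ?thesis"
    unfolding d_def[symmetric] r1(1,2) unfolding r1(3) q using A(2) by (simp add: sum_4 Lmat_def ad L_def[symmetric] algebra_simps)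
  have e3: "k = 3 \<Longrightarrow> ?thesis"
  proof -
    assume k: "k = 3"
    have "a * 1 + (u + \<i> * L) * (g * b - \<i> * L * a) * (-1) =
       L*(a*\<i>*u - b*\<i>*g) + (1 - L*L/2)*(a-b) - L*L/2*(a+b)"
      using A(3) by (simp add: algebra_simps gu add_divide_distrib[symmetric])
    then show ?thesis
      unfolding d_def[symmetric] r1(1,2) unfolding r1(3) q k by (simp add: sum_4 Lmat_def ad L_def[symmetric] L2 algebra_simps gu add_divide_distrib[symmetric] power2_eq_square)
  qed
  have e4: "k = 4 \<Longrightarrow> ?thesis"
  proof -
    assume k: "k = 4"
    have "a * 1 + (u + \<i> * L) * (g * b - \<i> * L * a) * 1 =
       -(L*(a*\<i>*u - b*\<i>*g)) + L*L/2*(a-b) + (1 + L*L/2)*(a+b)"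
      using A(4) by (simp add: algebra_simps gu add_divide_distrib[symmetric])
    then show ?thesis
      unfolding d_def[symmetric] r1(1,2) unfolding r1(3) q k by (simp add: sum_4 Lmat_def ad L_def[symmetric] L2 algebra_simps gu add_divide_distrib[symmetric] power2_eq_square)
  qed
  show ?thesis using exhaust_4[of k] e1 e2 e3 e4 by blast
qed

lemma dzR_has:
  assumes "(f has_derivative f') (at z)"
  shows "dzR f z = (complex_of_real (f' 1) - \<i> * complex_of_real (f' \<i>)) / 2"
proof -
  have "((\<lambda>w. complex_of_real (f w)) has_derivative (\<lambda>h. complex_of_real (f' h))) (at z)"
    using has_derivative_of_real[OF assms] by simp
  then have "frechet_derivative (\<lambda>w. complex_of_real (f w)) (at z) = (\<lambda>h. complex_of_real (f' h))"
    by (metis frechet_derivative_at)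
  then show ?thesis unfolding dzR_def dz_def pu_def pv_def by simp
qed

lemma dzR_zero:
  assumes "(f has_derivative f') (at z)" and "dzR f z = 0"
  shows "f' = (\<lambda>h. 0)"
proof -
  have "(complex_of_real (f' 1) - \<i> * complex_of_real (f' \<i>)) = 0"
    using dzR_has[OF assms(1)] assms(2) by simp
  then have z1: "f' 1 = 0" and z2: "f' \<i> = 0"
    by (simp_all add: complex_eq_iff)
  have lin: "linear f'" using assms(1) has_derivative_linear by blast
  show ?thesis
  proof
    fix h :: complex
    have "h = Re h *\<^sub>R 1 + Im h *\<^sub>R \<i>" by (simp add: complex_eq_iff)
    then have "f' h = f' (Re h *\<^sub>R 1 + Im h *\<^sub>R \<i>)" by simp
    also have "\<dots> = Re h * f' 1 + Im h * f' \<i>"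
      using lin by (simp add: linear_add linear_scale)
    finally show "f' h = 0" using z1 z2 by simp
  qed
qed

theorem mainTheorem8:
  fixes \<Omega> :: "complex set" and g :: "complex \<Rightarrow> complex" and P Q Ql :: "complex \<Rightarrow> real"
    and l :: real and X Xl :: "complex \<Rightarrow> real ^ 4"
  assumes "open \<Omega>" and "connected \<Omega>" and "simply_connected \<Omega>"
    and "WD1 \<Omega> g P Q"
    and "\<forall>z\<in>\<Omega>. 1 + \<i> * complex_of_real l * g z \<noteq> 0"
    and "C2_on \<Omega> Ql"
    and "\<forall>z\<in>\<Omega>. dzR Ql z = (1 / g z + \<i> * complex_of_real l) * (g z * dzR Q z - \<i> * complex_of_real l * dzR P z)"
    and "is_X \<Omega> g P Q X"
    and "is_X \<Omega> (\<lambda>z. g z / (1 + \<i> * complex_of_real l * g z)) P Ql Xl"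
  shows "(\<exists>c. \<forall>z\<in>\<Omega>. Xl z = Lmat l *v X z + c) \<and>
         (\<forall>x y. lorentz (Lmat l *v x) (Lmat l *v y) = lorentz x y)"
proof
  define Y where "Y k w = Xl w $ k - (\<Sum>j\<in>UNIV. Lmat l $ k $ j * X w $ j)" for k w
  have gnz: "\<forall>z\<in>\<Omega>. g z \<noteq> 0" using assms(4) unfolding WD1_def by blast
  have Xd: "\<forall>z\<in>\<Omega>. X differentiable (at z)" and Xz1: "\<forall>z\<in>\<Omega>. \<forall>k. dzR (\<lambda>w. X w $ k) z = Xz g P Q z $ k"
    using assms(8) unfolding is_X_def by blast+
  have Xld: "\<forall>z\<in>\<Omega>. Xl differentiable (at z)"
    and Xz2: "\<forall>z\<in>\<Omega>. \<forall>k. dzR (\<lambda>w. Xl w $ k) z = Xz (\<lambda>z. g z / (1 + \<i> * complex_of_real l * g z)) P Ql z $ k"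
    using assms(9) unfolding is_X_def by blast+
  have Yder: "((Y k) has_derivative (\<lambda>h. 0)) (at z)" if z: "z \<in> \<Omega>" for k z
  proof -
    define D where "D = frechet_derivative X (at z)"
    define Dl where "Dl = frechet_derivative Xl (at z)"
    have hD: "(X has_derivative D) (at z)" unfolding D_def using Xd z frechet_derivative_works by blast
    have hDl: "(Xl has_derivative Dl) (at z)" unfolding Dl_def using Xld z frechet_derivative_works by blast
    have cD: "((\<lambda>w. X w $ j) has_derivative (\<lambda>h. D h $ j)) (at z)" for j
      using bounded_linear.has_derivative[OF bounded_linear_vec_nth hD] .
    have cDl: "((\<lambda>w. Xl w $ j) has_derivative (\<lambda>h. Dl h $ j)) (at z)" for j
      using bounded_linear.has_derivative[OF bounded_linear_vec_nth hDl] .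
    have hY: "((Y k) has_derivative (\<lambda>h. Dl h $ k - (\<Sum>j\<in>UNIV. Lmat l $ k $ j * D h $ j))) (at z)"
      unfolding Y_def[abs_def]
      by (intro has_derivative_diff has_derivative_sum has_derivative_mult_right cDl cD)
    have "dzR (Y k) z = (complex_of_real (Dl 1 $ k) - \<i> * complex_of_real (Dl \<i> $ k)) / 2
        - (\<Sum>j\<in>UNIV. complex_of_real (Lmat l $ k $ j) * ((complex_of_real (D 1 $ j) - \<i> * complex_of_real (D \<i> $ j)) / 2))"
      unfolding dzR_has[OF hY]
      by (simp add: sum_4 field_simps)
    also have "\<dots> = dzR (\<lambda>w. Xl w $ k) z - (\<Sum>j\<in>UNIV. complex_of_real (Lmat l $ k $ j) * dzR (\<lambda>w. X w $ j) z)"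
      unfolding dzR_has[OF cD] dzR_has[OF cDl] ..
    also have "\<dots> = Xz (\<lambda>z. g z / (1 + \<i> * complex_of_real l * g z)) P Ql z $ k
        - (\<Sum>j\<in>UNIV. complex_of_real (Lmat l $ k $ j) * Xz g P Q z $ j)"
      using Xz1 Xz2 z by simp
    also have "\<dots> = 0"
      unfolding Xz_def
      using alg[of "g z" l "dzR Ql z" "dzR Q z" "dzR P z" k] gnz assms(5) assms(7) z
      by simp
    finally have "dzR (Y k) z = 0" .
    with hY dzR_zero have "(\<lambda>h. Dl h $ k - (\<Sum>j\<in>UNIV. Lmat l $ k $ j * D h $ j)) = (\<lambda>h. 0)" by blast
    with hY show ?thesis by simp
  qed
  have "Y k constant_on \<Omega>" for k
  proof (rule has_derivative_zero_connected_constant_on[where K="{}"])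
    show "continuous_on \<Omega> (Y k)"
      using Yder by (meson continuous_at_imp_continuous_on differentiableI differentiable_imp_continuous_within)
    show "\<forall>x\<in>\<Omega> - {}. (Y k has_derivative (\<lambda>h. 0)) (at x within \<Omega>)"
      using Yder has_derivative_at_withinI by blast
  qed (use assms(1,2) in auto)
  then have "\<forall>k. \<exists>y. \<forall>z\<in>\<Omega>. Y k z = y" unfolding constant_on_def by blast
  then obtain cf where cf: "\<forall>k. \<forall>z\<in>\<Omega>. Y k z = cf k" by metis
  show "\<exists>c. \<forall>z\<in>\<Omega>. Xl z = Lmat l *v X z + c"
  proof (intro exI ballI)
    fix z assume "z \<in> \<Omega>"
    then show "Xl z = Lmat l *v X z + (\<chi> k. cf k)"
      using cf unfolding vec_eq_iff Y_def by (auto simp: matrix_vector_mult_def algebra_simps)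
  qed
next
  show "\<forall>x y. lorentz (Lmat l *v x) (Lmat l *v y) = lorentz x y"
    by (simp add: lorentz_def matrix_vector_mult_def Lmat_def sum_4 algebra_simps power2_eq_square field_simps)
qed

end
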